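(* Let $\mathcal C$ be an SCW code with $M\ge2$ codewords of length $K$ over the symbol set $\mathcal S$, used with equiprobable codewords over the Poisson channel with fixed CSI $(\bar c_{\mathrm s},\bar c_{\mathrm n})\in(0,\infty)^2$, and let $P_e^{\mathrm{code}}$ be the codeword error rate of the optimal (coherent ML) detector. Then for every $t>0$, $$P_e^{\mathrm{code}}\le\frac1M\sum_{\mathbf s\in\mathcal C}\ \sum_{\hat{\mathbf s}\in\mathcal C,\,\hat{\mathbf s}\ne\mathbf s}\exp\!\left(\sum_{k=1}^K\lambda[k]\left(e^{\varpi[k]t}-1\right)\right),$$ where $\lambda[k]=s[k]\bar c_{\mathrm s}+\bar c_{\mathrm n}$ and $\varpi[k]=\ln\!\left(\frac{1+\hat s[k]\,\mathsf{SNR}}{1+s[k]\,\mathsf{SNR}}\right)$ with $\mathsf{SNR}=\bar c_{\mathrm s}/\bar c_{\mathrm n}$.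
   Context: Symbol set $\mathcal S=\{\eta_0,\dots,\eta_{L-1}\}$ with $0=\eta_0<\dots<\eta_{L-1}=1$. An SCW code with weight vector $\bar{\boldsymbol\omega}$ is a codebook $\mathcal C\subseteq\mathcal S^K$ ($K=\sum_\ell\bar\omega_\ell$) in which every codeword has exactly $\bar\omega_\ell$ entries equal to $\eta_\ell$ for each $\ell$. Channel: given transmitted codeword $\mathbf s$, the observations $r[1],\dots,r[K]$ are independent with $r[k]$ Poisson of mean $s[k]\bar c_{\mathrm s}+\bar c_{\mathrm n}$. The optimal detector outputs a codeword maximizing the likelihood $\prod_{k}\frac{(\bar c_{\mathrm s}s[k]+\bar c_{\mathrm n})^{r[k]}e^{-\bar c_{\mathrm s}s[k]-\bar c_{\mathrm n}}}{r[k]!}$ over $\mathcal C$, ties broken uniformly at random among maximizers. The transmitted codeword is uniform on $\mathcal C$, and $P_e^{\mathrm{code}}$ is the probability that the detected codeword differs from the transmitted one. *)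

theory Defs
  imports "HOL-Probability.Probability"
begin

definition symbol_set :: "nat \<Rightarrow> (nat \<Rightarrow> real) \<Rightarrow> bool" where
  "symbol_set L \<eta> \<longleftrightarrow> L \<ge> 1 \<and> strict_mono_on {0..<L} \<eta> \<and> \<eta> 0 = 0 \<and> \<eta> (L - 1) = 1"

definition code_length :: "nat \<Rightarrow> (nat \<Rightarrow> nat) \<Rightarrow> nat" where
  "code_length L \<omega> = (\<Sum>l<L. \<omega> l)"

definition scw_code :: "nat \<Rightarrow> (nat \<Rightarrow> real) \<Rightarrow> (nat \<Rightarrow> nat) \<Rightarrow> (nat \<Rightarrow> real) set \<Rightarrow> bool" where
  "scw_code L \<eta> \<omega> C \<longleftrightarrow>
     C \<subseteq> PiE {0..<code_length L \<omega>} (\<lambda>_. \<eta> ` {0..<L}) \<and>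
     (\<forall>s\<in>C. \<forall>l<L. card {k\<in>{0..<code_length L \<omega>}. s k = \<eta> l} = \<omega> l)"

definition likelihood :: "real \<Rightarrow> real \<Rightarrow> nat \<Rightarrow> (nat \<Rightarrow> real) \<Rightarrow> (nat \<Rightarrow> nat) \<Rightarrow> real" where
  "likelihood cs cn K s r =
     (\<Prod>k<K. (cs * s k + cn) ^ r k * exp (- cs * s k - cn) / fact (r k))"

definition ml_set :: "real \<Rightarrow> real \<Rightarrow> nat \<Rightarrow> (nat \<Rightarrow> real) set \<Rightarrow> (nat \<Rightarrow> nat) \<Rightarrow> (nat \<Rightarrow> real) set" where
  "ml_set cs cn K C r = {c\<in>C. \<forall>c'\<in>C. likelihood cs cn K c' r \<le> likelihood cs cn K c r}"

text \<open>Probability that the detector (uniform tie breaking) outputs s, given r.\<close>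
definition detect_prob :: "real \<Rightarrow> real \<Rightarrow> nat \<Rightarrow> (nat \<Rightarrow> real) set \<Rightarrow> (nat \<Rightarrow> real) \<Rightarrow> (nat \<Rightarrow> nat) \<Rightarrow> real" where
  "detect_prob cs cn K C s r =
     (if s \<in> ml_set cs cn K C r then 1 / real (card (ml_set cs cn K C r)) else 0)"

definition channel :: "real \<Rightarrow> real \<Rightarrow> nat \<Rightarrow> (nat \<Rightarrow> real) \<Rightarrow> (nat \<Rightarrow> nat) pmf" where
  "channel cs cn K s = Pi_pmf {0..<K} 0 (\<lambda>k. poisson_pmf (s k * cs + cn))"

definition Pe_code :: "real \<Rightarrow> real \<Rightarrow> nat \<Rightarrow> (nat \<Rightarrow> real) set \<Rightarrow> real" where
  "Pe_code cs cn K C =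
     (1 / real (card C)) * (\<Sum>s\<in>C. 1 - measure_pmf.expectation (channel cs cn K s) (detect_prob cs cn K C s))"

end

theory Submission
  imports Defs
begin

lemma poisson_mgf:
  fixes a q :: real
  assumes a: "a > 0" and q: "q \<ge> 0"
  shows "(\<integral>\<^sup>+ x. ennreal (q ^ x) \<partial>measure_pmf (poisson_pmf a)) = ennreal (exp (a * (q - 1)))"
proof -
  have sm: "(\<lambda>n. (a*q)^n / fact n * exp (-a)) sums (exp (a*q) * exp (-a))"
    using exp_converges[of "a*q"] by (intro sums_mult2) (simp add: divide_inverse mult.commute)
  have "(\<integral>\<^sup>+ x. ennreal (q ^ x) \<partial>measure_pmf (poisson_pmf a))
      = (\<integral>\<^sup>+ x. ennreal ((a*q)^x / fact x * exp (-a)) \<partial>count_space UNIV)"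
    unfolding nn_integral_measure_pmf
    by (intro nn_integral_cong) (use a q in \<open>simp add: ennreal_mult'[symmetric] power_mult_distrib\<close>)
  also have "\<dots> = (\<Sum>x. ennreal ((a*q)^x / fact x * exp (-a)))"
    by (rule nn_integral_count_space_nat)
  also have "\<dots> = ennreal (\<Sum>x. (a*q)^x / fact x * exp (-a))"
    by (rule suminf_ennreal2) (use a q sm in \<open>auto simp: sums_iff\<close>)
  also have "(\<Sum>x. (a*q)^x / fact x * exp (-a)) = exp (a * (q - 1))"
  proof -
    have "exp (a*q) * exp (-a) = exp (a * (q - 1))" by (simp add: mult_exp_exp algebra_simps)
    thus ?thesis using sums_unique[OF sm] by simp
  qed
  finally show ?thesis .
qed

lemma chernoff_pair:
  fixes cs cn t :: real and K :: nat and s s' :: "nat \<Rightarrow> real"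
  assumes cs: "cs > 0" and cn: "cn > 0" and t: "t > 0"
    and nn: "\<And>k. k < K \<Longrightarrow> s k \<ge> 0" and nn': "\<And>k. k < K \<Longrightarrow> s' k \<ge> 0"
    and sumeq: "(\<Sum>k<K. s k) = (\<Sum>k<K. s' k)"
  shows "measure_pmf.prob (channel cs cn K s) {r. likelihood cs cn K s r \<le> likelihood cs cn K s' r}
     \<le> exp (\<Sum>k<K. (s k * cs + cn) *
              (exp (ln ((1 + s' k * (cs / cn)) / (1 + s k * (cs / cn))) * t) - 1))"
proof -
  define a where "a k = s k * cs + cn" for k
  define b where "b k = s' k * cs + cn" for k
  define w where "w k = ln ((1 + s' k * (cs / cn)) / (1 + s k * (cs / cn)))" for k
  have apos: "a k > 0" if "k < K" for k
    using nn[OF that] cs cn unfolding a_def by (simp add: add_nonneg_pos)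
  have bpos: "b k > 0" if "k < K" for k
    using nn'[OF that] cs cn unfolding b_def by (simp add: add_nonneg_pos)
  have ew: "exp (w k) = b k / a k" if "k < K" for k
  proof -
    have "(1 + s' k * (cs / cn)) / (1 + s k * (cs / cn)) = b k / a k"
    proof -
      have "1 + s' k * (cs / cn) = b k / cn" "1 + s k * (cs / cn) = a k / cn"
        using cn unfolding a_def b_def by (simp_all add: field_simps)
      thus ?thesis using cn by simp
    qed
    thus ?thesis unfolding w_def using apos[OF that] bpos[OF that] by simp
  qed
  have lik: "likelihood cs cn K s' r = likelihood cs cn K s r * exp (\<Sum>k<K. real (r k) * w k)" for r
  proof -
    have "likelihood cs cn K s' r = (\<Prod>k<K. ((cs * s k + cn) ^ r k * exp (- cs * s k - cn) / fact (r k))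
          * exp (real (r k) * w k) * exp (a k - b k))"
      unfolding likelihood_def
    proof (intro prod.cong refl)
      fix k assume "k \<in> {..<K}"
      hence k: "k < K" by simp
      have e1: "exp (real (r k) * w k) = (b k / a k) ^ r k" by (simp add: exp_of_nat_mult ew[OF k])
      have e2: "exp (- cs * s k - cn) * exp (a k - b k) = exp (- cs * s' k - cn)"
        unfolding a_def b_def by (simp add: mult_exp_exp algebra_simps)
      have e3: "(cs * s k + cn) ^ r k * (b k / a k) ^ r k = (cs * s' k + cn) ^ r k"
        using apos[OF k] unfolding a_def b_def by (simp add: power_divide mult.commute)
      show "(cs * s' k + cn) ^ r k * exp (- cs * s' k - cn) / fact (r k) =
         (cs * s k + cn) ^ r k * exp (- cs * s k - cn) / fact (r k) * exp (real (r k) * w k) * exp (a k - b k)"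
        unfolding e1 e2[symmetric] e3[symmetric] by simp
    qed
    also have "\<dots> = likelihood cs cn K s r * exp (\<Sum>k<K. real (r k) * w k) * exp (\<Sum>k<K. a k - b k)"
      by (simp only: likelihood_def prod.distrib exp_sum finite_lessThan)
    also have "(\<Sum>k<K. a k - b k) = 0"
      unfolding a_def b_def sum_subtractf sum.distrib sum_distrib_right[symmetric] using sumeq by simp
    finally show ?thesis by simp
  qed
  have likpos: "likelihood cs cn K s r > 0" for r
    unfolding likelihood_def
    by (intro prod_pos) (use apos in \<open>auto simp: a_def mult.commute\<close>)
  define A where "A = {r. likelihood cs cn K s r \<le> likelihood cs cn K s' r}"
  define g where "g r = (\<Prod>k\<in>{0..<K}. exp (w k * t) ^ r k)" for r :: "nat \<Rightarrow> nat"
  have ind: "indicator A r \<le> ennreal (g r)" for r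
  proof (cases "r \<in> A")
    case True
    hence "likelihood cs cn K s r \<le> likelihood cs cn K s r * exp (\<Sum>k<K. real (r k) * w k)"
      unfolding A_def lik by simp
    hence "1 \<le> exp (\<Sum>k<K. real (r k) * w k)" using likpos[of r] by simp
    hence "0 \<le> (\<Sum>k<K. real (r k) * w k)" by simp
    hence "0 \<le> t * (\<Sum>k<K. real (r k) * w k)" using t by simp
    hence "1 \<le> exp (t * (\<Sum>k<K. real (r k) * w k))" by simp
    also have "exp (t * (\<Sum>k<K. real (r k) * w k)) = g r"
      unfolding g_def sum_distrib_left lessThan_atLeast0
      by (simp add: exp_sum, intro prod.cong refl) (simp add: exp_of_nat_mult[symmetric] algebra_simps)
    finally show ?thesis using True by simp
  qed (simp add: g_def)
  have "emeasure (measure_pmf (channel cs cn K s)) A = (\<integral>\<^sup>+ r. indicator A r \<partial>measure_pmf (channel cs cn K s))"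
    by simp
  also have "\<dots> \<le> (\<integral>\<^sup>+ r. ennreal (g r) \<partial>measure_pmf (channel cs cn K s))"
    by (intro nn_integral_mono ind)
  also have "\<dots> = (\<integral>\<^sup>+ r. (\<Prod>k\<in>{0..<K}. ennreal (exp (w k * t) ^ r k)) \<partial>measure_pmf (channel cs cn K s))"
    unfolding g_def by (intro nn_integral_cong prod_ennreal[symmetric]) auto
  also have "\<dots> = (\<Prod>k\<in>{0..<K}. (\<integral>\<^sup>+ x. ennreal (exp (w k * t) ^ x) \<partial>measure_pmf (poisson_pmf (s k * cs + cn))))"
    unfolding channel_def by (rule nn_integral_prod_Pi_pmf) simp
  also have "\<dots> = (\<Prod>k\<in>{0..<K}. ennreal (exp ((s k * cs + cn) * (exp (w k * t) - 1))))"
    by (intro prod.cong refl poisson_mgf) (use apos in \<open>auto simp: a_def\<close>)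
  also have "\<dots> = ennreal (\<Prod>k\<in>{0..<K}. exp ((s k * cs + cn) * (exp (w k * t) - 1)))"
    by (rule prod_ennreal) simp
  also have "(\<Prod>k\<in>{0..<K}. exp ((s k * cs + cn) * (exp (w k * t) - 1)))
     = exp (\<Sum>k<K. (s k * cs + cn) * (exp (w k * t) - 1))"
    unfolding lessThan_atLeast0 by (simp add: exp_sum)
  finally have "emeasure (measure_pmf (channel cs cn K s)) A \<le> ennreal (exp (\<Sum>k<K. (s k * cs + cn) * (exp (w k * t) - 1)))" .
  thus ?thesis unfolding measure_pmf.emeasure_eq_measure A_def w_def by simp
qed


lemma sum_codeword:
  assumes scw: "scw_code L \<eta> \<omega> C" and sm: "strict_mono_on {0..<L} \<eta>" and s: "s \<in> C"
  shows "(\<Sum>k<code_length L \<omega>. s k) = (\<Sum>l<L. \<eta> l * real (\<omega> l))"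
proof -
  define K where "K = code_length L \<omega>"
  have img: "s ` {0..<K} \<subseteq> \<eta> ` {0..<L}"
    using scw s unfolding scw_code_def K_def by (auto dest!: subsetD PiE_mem)
  have cnt: "\<And>l. l < L \<Longrightarrow> card {k\<in>{0..<K}. s k = \<eta> l} = \<omega> l"
    using scw s unfolding scw_code_def K_def by auto
  have inj: "inj_on \<eta> {0..<L}" using sm by (rule strict_mono_on_imp_inj_on)
  have "(\<Sum>k<K. s k) = (\<Sum>v\<in>\<eta> ` {0..<L}. \<Sum>k\<in>{k. k \<in> {0..<K} \<and> s k = v}. s k)"
    unfolding lessThan_atLeast0 by (rule sum.group[symmetric]) (use img in auto)
  also have "\<dots> = (\<Sum>v\<in>\<eta> ` {0..<L}. v * real (card {k\<in>{0..<K}. s k = v}))"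
    by (intro sum.cong refl) simp
  also have "\<dots> = (\<Sum>l\<in>{0..<L}. \<eta> l * real (card {k\<in>{0..<K}. s k = \<eta> l}))"
    by (rule sum.reindex_cong[OF inj refl]) simp
  also have "\<dots> = (\<Sum>l<L. \<eta> l * real (\<omega> l))"
    unfolding lessThan_atLeast0 by (intro sum.cong refl) (use cnt in simp)
  finally show ?thesis unfolding K_def .
qed

lemma detect_bound:
  assumes "s \<in> C" "finite C"
  shows "1 - detect_prob cs cn K C s r \<le>
    indicator (\<Union>s'\<in>C - {s}. {r. likelihood cs cn K s r \<le> likelihood cs cn K s' r}) r"
proof (cases "r \<in> (\<Union>s'\<in>C - {s}. {r. likelihood cs cn K s r \<le> likelihood cs cn K s' r})")
  case True
  have "detect_prob cs cn K C s r \<ge> 0" unfolding detect_prob_def by simp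
  thus ?thesis using True by simp
next
  case False
  have lt: "likelihood cs cn K c r < likelihood cs cn K s r" if "c \<in> C" "c \<noteq> s" for c
  proof -
    have "\<not> likelihood cs cn K s r \<le> likelihood cs cn K c r" using False that by blast
    thus ?thesis by simp
  qed
  have "ml_set cs cn K C r = {s}"
    unfolding ml_set_def using assms(1) lt by (force simp: not_le[symmetric])
  thus ?thesis using False unfolding detect_prob_def by simp
qed

theorem proposition2:
  fixes L :: nat and \<eta> :: "nat \<Rightarrow> real" and \<omega> :: "nat \<Rightarrow> nat"
    and C :: "(nat \<Rightarrow> real) set" and cs cn t :: real
  assumes "symbol_set L \<eta>"
    and "scw_code L \<eta> \<omega> C"
    and "card C \<ge> 2"
    and "cs > 0" and "cn > 0"
    and "t > 0"
  shows "Pe_code cs cn (code_length L \<omega>) C \<le>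
    (1 / real (card C)) * (\<Sum>s\<in>C. \<Sum>s'\<in>C - {s}.
       exp (\<Sum>k<code_length L \<omega>.
              (s k * cs + cn) *
              (exp (ln ((1 + s' k * (cs / cn)) / (1 + s k * (cs / cn))) * t) - 1)))"
proof -
  define K where "K = code_length L \<omega>"
  from assms(1) have sm: "strict_mono_on {0..<L} \<eta>" and eta0: "\<eta> 0 = 0"
    by (auto simp: symbol_set_def)
  have eta_nn: "\<eta> l \<ge> 0" if "l < L" for l
  proof (cases "l = 0")
    case False
    hence "\<eta> 0 < \<eta> l" using that by (intro strict_mono_onD[OF sm]) auto
    thus ?thesis using eta0 by simp
  qed (simp add: eta0)
  have nn: "s k \<ge> 0" if "s \<in> C" "k < K" for s k
  proof -
    have "s \<in> PiE {0..<K} (\<lambda>_. \<eta> ` {0..<L})" using assms(2) that(1) unfolding scw_code_def K_def by auto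
    hence "s k \<in> \<eta> ` {0..<L}" using that(2) by (auto dest: PiE_mem)
    thus ?thesis using eta_nn by auto
  qed
  have sumeq: "(\<Sum>k<K. s k) = (\<Sum>k<K. s' k)" if "s \<in> C" "s' \<in> C" for s s'
    unfolding K_def using sum_codeword[OF assms(2) sm] that by simp
  have fin: "finite C" using assms(3) card.infinite by force
  have key: "1 - measure_pmf.expectation (channel cs cn K s) (detect_prob cs cn K C s) \<le>
      (\<Sum>s'\<in>C - {s}. exp (\<Sum>k<K. (s k * cs + cn) *
              (exp (ln ((1 + s' k * (cs / cn)) / (1 + s k * (cs / cn))) * t) - 1)))"
    if s: "s \<in> C" for s
  proof -
    define M where "M = measure_pmf (channel cs cn K s)"
    define A where "A s' = {r. likelihood cs cn K s r \<le> likelihood cs cn K s' r}" for s'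
    have dp: "norm (detect_prob cs cn K C s r) \<le> 1" for r
    proof (cases "s \<in> ml_set cs cn K C r")
      case True
      have "finite (ml_set cs cn K C r)" using fin unfolding ml_set_def by simp
      hence "card (ml_set cs cn K C r) \<ge> 1" using True by (metis One_nat_def Suc_leI card_gt_0_iff empty_iff)
      thus ?thesis using True unfolding detect_prob_def by simp
    qed (simp add: detect_prob_def)
    have int: "integrable M (detect_prob cs cn K C s)"
      unfolding M_def
      by (rule measure_pmf.integrable_const_bound[where B=1]) (use dp in auto)
    have "1 - measure_pmf.expectation (channel cs cn K s) (detect_prob cs cn K C s)
        = integral\<^sup>L M (\<lambda>r. 1 - detect_prob cs cn K C s r)"
      unfolding M_def using int[unfolded M_def] by (simp add: Bochner_Integration.integral_diff measure_pmf.prob_space)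
    also have "\<dots> \<le> integral\<^sup>L M (indicator (\<Union>s'\<in>C - {s}. A s'))"
      unfolding A_def
      by (intro integral_mono detect_bound[OF s fin] Bochner_Integration.integrable_diff int)
         (auto simp: M_def intro!: measure_pmf.integrable_const_bound[where B=1])
    also have "\<dots> = measure M (\<Union>s'\<in>C - {s}. A s')" by (simp add: M_def)
    also have "\<dots> \<le> (\<Sum>s'\<in>C - {s}. measure M (A s'))"
      unfolding M_def by (rule measure_pmf.finite_measure_subadditive_finite) (use fin in auto)
    also have "\<dots> \<le> (\<Sum>s'\<in>C - {s}. exp (\<Sum>k<K. (s k * cs + cn) *
              (exp (ln ((1 + s' k * (cs / cn)) / (1 + s k * (cs / cn))) * t) - 1)))"
      unfolding M_def A_def
      by (intro sum_mono chernoff_pair assms(4-6) nn sumeq s) auto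
    finally show ?thesis .
  qed
  show ?thesis
    unfolding Pe_code_def K_def[symmetric]
    by (intro mult_left_mono sum_mono key) auto
qed

end
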